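(* No rank $16$ rootless integral lattice $Q$ with $\mathcal{D}(Q)\cong5^4$ is isometric to a sublattice of $HS_{16}$.
   Context: All lattices are positive definite; rootless means no vectors of norm $2$; $\mathcal{D}(L)=L^*/L$. $HS_{16}$ denotes the rank $16$ even unimodular lattice not isometric to $E_8\perp E_8$ (the lattice $D_{16}^+$, whose root sublattice is $D_{16}$). *)

theory Defs
  imports "HOL-Analysis.Analysis" "HOL-Algebra.Product_Groups" "HOL-Algebra.Elementary_Groups"
begin

text \<open>A lattice of rank 16 is represented (up to isometry) by its Gram matrix
  G with respect to a Z-basis: the lattice is Z^16 (integer coordinate vectors
  inside R^16) with bilinear form (x,y) |-> x^T G y.  Integral means G has
  integer entries.\<close>

definition bil :: "real^16^16 \<Rightarrow> real^16 \<Rightarrow> real^16 \<Rightarrow> real" where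
  "bil G x y = x \<bullet> (G *v y)"

definition intvecs :: "(real^16) set" where
  "intvecs = {x. \<forall>i. x $ i \<in> \<int>}"

definition gram :: "int^16^16 \<Rightarrow> real^16^16" where
  "gram G = (\<chi> i j. of_int (G $ i $ j))"

definition pos_def_integral_lattice :: "int^16^16 \<Rightarrow> bool" where
  "pos_def_integral_lattice G \<longleftrightarrow>
     (\<forall>i j. G $ i $ j = G $ j $ i) \<and>
     (\<forall>x::real^16. x \<noteq> 0 \<longrightarrow> bil (gram G) x x > 0)"

definition rootless :: "int^16^16 \<Rightarrow> bool" where
  "rootless G \<longleftrightarrow> (\<forall>x\<in>intvecs. bil (gram G) x x \<noteq> 2)"

definition dual_lattice :: "int^16^16 \<Rightarrow> (real^16) set" where
  "dual_lattice G = {x. \<forall>y\<in>intvecs. bil (gram G) x y \<in> \<int>}"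

definition dual_group :: "int^16^16 \<Rightarrow> (real^16) monoid" where
  "dual_group G = \<lparr>carrier = dual_lattice G, monoid.mult = (+), one = 0\<rparr>"

definition discriminant_group :: "int^16^16 \<Rightarrow> (real^16) set monoid" where
  "discriminant_group G = dual_group G Mod intvecs"

definition elem_ab_5_4 :: "(nat \<Rightarrow> int) monoid" where
  "elem_ab_5_4 = product_group {..<4::nat} (\<lambda>_. integer_mod_group 5)"

definition D16 :: "(real^16) set" where
  "D16 = {x\<in>intvecs. even (\<lfloor>\<Sum>i\<in>UNIV. x $ i\<rfloor>)}"

definition HS16 :: "(real^16) set" where
  "HS16 = D16 \<union> (\<lambda>x. x + (\<chi> i. 1/2)) ` D16"

definition isometric_to_sublattice_HS16 :: "int^16^16 \<Rightarrow> bool" where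
  "isometric_to_sublattice_HS16 G \<longleftrightarrow>
     (\<exists>b :: 16 \<Rightarrow> real^16. (\<forall>i. b i \<in> HS16) \<and>
        (\<forall>i j. b i \<bullet> b j = of_int (G $ i $ j)))"

end

theory Submission imports Defs begin

lemma dvd625: "(d::nat) dvd 625 \<Longrightarrow> 31 \<le> d \<Longrightarrow> d = 125 \<or> d = 625"
proof -
  assume a: "d dvd 625" "31 \<le> d"
  have "d dvd 5^4" using a by simp
  then obtain m where "m \<le> 4" "d = 5^m" using divides_primepow_nat[of 5 d 4] by auto
  then have "m = 0 \<or> m = 1 \<or> m = 2 \<or> m = 3 \<or> m = 4" by arith
  then show ?thesis using a(2) \<open>d = 5^m\<close> by auto
qed

lemma intvecs_add: "x \<in> intvecs \<Longrightarrow> y \<in> intvecs \<Longrightarrow> x + y \<in> intvecs"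
  by (auto simp: intvecs_def)
lemma intvecs_diff: "x \<in> intvecs \<Longrightarrow> y \<in> intvecs \<Longrightarrow> x - y \<in> intvecs"
  by (auto simp: intvecs_def)
lemma intvecs_neg: "x \<in> intvecs \<Longrightarrow> - x \<in> intvecs"
  by (auto simp: intvecs_def)
lemma intvecs_zero: "0 \<in> intvecs"
  by (auto simp: intvecs_def)
lemma intvecs_scale: "x \<in> intvecs \<Longrightarrow> of_int k *\<^sub>R x \<in> intvecs"
  by (auto simp: intvecs_def)
lemma intvecs_scale_nat: "x \<in> intvecs \<Longrightarrow> of_nat k *\<^sub>R x \<in> intvecs"
  using intvecs_scale[of x "int k"] by simp
lemma intvecs_scale_num: "x \<in> intvecs \<Longrightarrow> numeral k *\<^sub>R x \<in> intvecs"
  using intvecs_scale[of x "numeral k"] by simp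

lemma sum_intvecs: "x \<in> intvecs \<Longrightarrow> (\<Sum>i\<in>UNIV. x $ i) \<in> \<int>"
  by (auto simp: intvecs_def intro: Ints_sum)

lemma D16_iff: "x \<in> D16 \<longleftrightarrow> x \<in> intvecs \<and> (\<exists>s. even s \<and> (\<Sum>i\<in>UNIV. x $ i) = of_int s)"
proof
  assume "x \<in> D16"
  then show "x \<in> intvecs \<and> (\<exists>s. even s \<and> (\<Sum>i\<in>UNIV. x $ i) = of_int s)"
    unfolding D16_def using sum_intvecs[of x] by (auto elim!: Ints_cases)
next
  assume "x \<in> intvecs \<and> (\<exists>s. even s \<and> (\<Sum>i\<in>UNIV. x $ i) = of_int s)"
  then show "x \<in> D16" unfolding D16_def by auto
qed

definition hv :: "real^16" where "hv = (\<chi> i. 1/2)"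

lemma HS16_iff: "v \<in> HS16 \<longleftrightarrow> v \<in> D16 \<or> v - hv \<in> D16"
  unfolding HS16_def hv_def[symmetric] by (auto simp: image_iff) (metis diff_add_cancel)

lemma sum_add16: "(\<Sum>i\<in>UNIV. (x + y) $ i) = (\<Sum>i\<in>UNIV. x $ i) + (\<Sum>i\<in>UNIV. (y::real^16) $ i)"
  by (simp add: sum.distrib)
lemma sum_neg16: "(\<Sum>i\<in>UNIV. (- x) $ i) = - (\<Sum>i\<in>UNIV. (x::real^16) $ i)"
  by (simp add: sum_negf)

lemma D16_add: "x \<in> D16 \<Longrightarrow> y \<in> D16 \<Longrightarrow> x + y \<in> D16"
  unfolding D16_iff sum_add16 by (auto intro: intvecs_add) (metis even_add of_int_add)
lemma D16_neg: "x \<in> D16 \<Longrightarrow> - x \<in> D16"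
  unfolding D16_iff sum_neg16 by (auto intro: intvecs_neg) (metis even_minus of_int_minus)

lemma ones_D16: "2 *\<^sub>R hv \<in> D16"
proof -
  have "(\<Sum>i\<in>UNIV. (2 *\<^sub>R hv) $ i) = of_int 16" by (simp add: hv_def)
  moreover have "2 *\<^sub>R hv \<in> intvecs" by (simp add: hv_def intvecs_def)
  ultimately show ?thesis unfolding D16_iff by (metis even_numeral)
qed

lemma HS16_add: "u \<in> HS16 \<Longrightarrow> v \<in> HS16 \<Longrightarrow> u + v \<in> HS16"
proof -
  assume u: "u \<in> HS16" and v: "v \<in> HS16"
  have e1: "u + v - hv = (u - hv) + v" by (simp add: algebra_simps)
  have e2: "u + v - hv = u + (v - hv)" by (simp add: algebra_simps)
  have e3: "u + v = ((u - hv) + (v - hv)) + 2 *\<^sub>R hv" by (simp add: algebra_simps scaleR_2)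
  have "u + v \<in> D16 \<or> u + v - hv \<in> D16" using u v unfolding HS16_iff
  proof (elim disjE)
    assume "u \<in> D16" "v \<in> D16" then have "u + v \<in> D16" by (rule D16_add)
    then show ?thesis by (rule disjI1)
  next
    assume "u \<in> D16" "v - hv \<in> D16" 
    then have "u + (v - hv) \<in> D16" by (rule D16_add)
    then have "u + v - hv \<in> D16" by (simp only: e2)
    then show ?thesis by (rule disjI2)
  next
    assume "u - hv \<in> D16" "v \<in> D16"
    then have "(u - hv) + v \<in> D16" by (rule D16_add)
    then have "u + v - hv \<in> D16" by (simp only: e1)
    then show ?thesis by (rule disjI2)
  next
    assume "u - hv \<in> D16" "v - hv \<in> D16"
    then have "((u - hv) + (v - hv)) + 2 *\<^sub>R hv \<in> D16" by (intro D16_add ones_D16)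
    then have "u + v \<in> D16" by (simp only: e3[symmetric])
    then show ?thesis by (rule disjI1)
  qed
  then show ?thesis unfolding HS16_iff .
qed

lemma HS16_neg: "u \<in> HS16 \<Longrightarrow> - u \<in> HS16"
proof -
  assume u: "u \<in> HS16"
  have e: "- u - hv = - (u - hv) + (- (2 *\<^sub>R hv))" by (simp add: algebra_simps scaleR_2)
  show ?thesis using u unfolding HS16_iff
    by (metis D16_add D16_neg e ones_D16)
qed

lemma HS16_zero: "0 \<in> HS16"
  unfolding HS16_iff D16_iff using intvecs_zero by auto

lemma HS16_diff: "u \<in> HS16 \<Longrightarrow> v \<in> HS16 \<Longrightarrow> u - v \<in> HS16"
  using HS16_add[of u "-v"] HS16_neg by auto

lemma HS16_scale_nat: "u \<in> HS16 \<Longrightarrow> of_nat k *\<^sub>R u \<in> HS16"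
  by (induction k) (auto simp: HS16_zero scaleR_add_left intro: HS16_add)

lemma HS16_scale: assumes u: "u \<in> HS16" shows "of_int k *\<^sub>R u \<in> HS16"
proof (cases k rule: int_cases)
  case (nonneg n) then show ?thesis using HS16_scale_nat[OF u, of n] by simp
next
  case (neg n)
  have "of_nat (Suc n) *\<^sub>R u \<in> HS16" using u by (rule HS16_scale_nat)
  then have "- (of_nat (Suc n) *\<^sub>R u) \<in> HS16" by (rule HS16_neg)
  moreover have r: "(of_int k::real) = - of_nat (Suc n)" using neg by simp
  moreover have "of_int k *\<^sub>R u = - (of_nat (Suc n) *\<^sub>R u)" unfolding r by (rule scaleR_minus_left)
  ultimately show ?thesis by simp
qed

lemma HS16_sum: "(\<And>i. i \<in> A \<Longrightarrow> f i \<in> HS16) \<Longrightarrow> sum f A \<in> HS16"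
  by (induction A rule: infinite_finite_induct) (auto simp: HS16_zero intro: HS16_add)

lemma inner16: "(x::real^16) \<bullet> y = (\<Sum>i\<in>UNIV. x $ i * y $ i)"
  by (simp add: inner_vec_def)

lemma D16_inner_int: "x \<in> D16 \<Longrightarrow> y \<in> D16 \<Longrightarrow> x \<bullet> y \<in> \<int>"
  unfolding D16_iff inner16 intvecs_def by (auto intro!: Ints_sum Ints_mult)

lemma D16_inner_hv: "x \<in> D16 \<Longrightarrow> x \<bullet> hv \<in> \<int>"
proof -
  assume "x \<in> D16"
  then obtain s where s: "even s" "(\<Sum>i\<in>UNIV. x $ i) = of_int s" unfolding D16_iff by auto
  have "x \<bullet> hv = (\<Sum>i\<in>UNIV. x $ i) / 2" by (simp add: inner16 hv_def sum_divide_distrib)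
  also have "\<dots> = of_int (s div 2)" using s by (auto elim!: evenE)
  finally show ?thesis by simp
qed

lemma hv_hv: "hv \<bullet> hv = 4"
  by (simp add: inner16 hv_def)

lemma HS16_inner_int: "u \<in> HS16 \<Longrightarrow> v \<in> HS16 \<Longrightarrow> u \<bullet> v \<in> \<int>"
proof -
  assume u: "u \<in> HS16" and v: "v \<in> HS16"
  have eu: "u = (u - hv) + hv" and ev: "v = (v - hv) + hv" by simp_all
  show ?thesis using u v unfolding HS16_iff
  proof (elim disjE)
    assume "u \<in> D16" "v \<in> D16" then show ?thesis by (rule D16_inner_int)
  next
    assume a: "u \<in> D16" "v - hv \<in> D16"
    have "u \<bullet> v = u \<bullet> (v - hv) + u \<bullet> hv" by (simp add: inner_diff_right)
    then show ?thesis using a D16_inner_int D16_inner_hv by auto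
  next
    assume a: "u - hv \<in> D16" "v \<in> D16"
    have "u \<bullet> v = (u - hv) \<bullet> v + v \<bullet> hv" by (simp add: inner_diff_left inner_commute[of v hv])
    then show ?thesis using a D16_inner_int D16_inner_hv by auto
  next
    assume a: "u - hv \<in> D16" "v - hv \<in> D16"
    have "u \<bullet> v = (u - hv) \<bullet> (v - hv) + (u - hv) \<bullet> hv + (v - hv) \<bullet> hv + hv \<bullet> hv"
      by (simp add: algebra_simps inner_diff_left inner_diff_right inner_commute)
    then show ?thesis using a D16_inner_int D16_inner_hv hv_hv by auto
  qed
qed

definition ax :: "16 \<Rightarrow> real^16" where "ax i = axis i 1"

lemma sum_ax: "(\<Sum>k\<in>UNIV. ax i $ k) = 1"
proof -
  have "(\<Sum>k\<in>UNIV. ax i $ k) = (\<Sum>k\<in>UNIV. if k = i then 1 else 0)"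
    by (rule sum.cong) (auto simp: ax_def axis_def)
  also have "\<dots> = 1" by simp
  finally show ?thesis .
qed

lemma ax_intvecs: "ax i \<in> intvecs"
  by (simp add: ax_def axis_def intvecs_def)

lemma ax_D16: "2 *\<^sub>R ax i \<in> D16"
proof -
  have "(\<Sum>j\<in>UNIV. (2 *\<^sub>R ax i) $ j) = of_int 2" by (simp add: sum_ax sum_distrib_left[symmetric])
  moreover have "2 *\<^sub>R ax i \<in> intvecs" by (intro intvecs_scale_num ax_intvecs)
  ultimately show ?thesis unfolding D16_iff by (metis even_numeral)
qed

lemma root_D16: "(s::int) \<in> {1,-1} \<Longrightarrow> ax i - of_int s *\<^sub>R ax j \<in> D16"
proof -
  assume s: "s \<in> {1,-1}"
  have "(\<Sum>k\<in>UNIV. (ax i - of_int s *\<^sub>R ax j) $ k) = 1 - of_int s"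
    by (simp add: sum_subtractf sum_distrib_left[symmetric] sum_ax)
  moreover have "ax i - of_int s *\<^sub>R ax j \<in> intvecs" by (intro intvecs_diff intvecs_scale ax_intvecs)
  moreover have "even (1 - s)" using s by auto
  ultimately show ?thesis unfolding D16_iff by (metis of_int_1 of_int_diff)
qed

lemma root_norm: "i \<noteq> j \<Longrightarrow> (s::int) \<in> {1,-1} \<Longrightarrow> (ax i - of_int s *\<^sub>R ax j) \<bullet> (ax i - of_int s *\<^sub>R ax j) = 2"
  by (auto simp: ax_def inner_diff_left inner_diff_right inner_axis_axis)


section \<open>Discriminant group\<close>

lemma bil_add_left: "bil A (x + y) z = bil A x z + bil A y z"
  by (simp add: bil_def inner_add_left)
lemma bil_neg_left: "bil A (- x) z = - bil A x z"
  by (simp add: bil_def)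
lemma bil_diff_left: "bil A (x - y) z = bil A x z - bil A y z"
  by (simp add: bil_def inner_diff_left)
lemma bil_zero_left: "bil A 0 z = 0"
  by (simp add: bil_def)
lemma bil_scale_left: "bil A (c *\<^sub>R x) z = c * bil A x z"
  by (simp add: bil_def)
lemma bil_add_right: "bil A z (x + y) = bil A z x + bil A z y"
  by (simp add: bil_def matrix_vector_right_distrib inner_add_right)
lemma bil_scale_right: "bil A z (c *\<^sub>R x) = c * bil A z x"
  by (simp add: bil_def matrix_vector_mult_scaleR)

lemma bil_int: "x \<in> intvecs \<Longrightarrow> y \<in> intvecs \<Longrightarrow> bil (gram G) x y \<in> \<int>"
  unfolding bil_def inner16 intvecs_def gram_def
  by (auto simp: matrix_vector_mult_def intro!: Ints_sum Ints_mult)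

lemma intvecs_dual: "intvecs \<subseteq> dual_lattice G"
  unfolding dual_lattice_def using bil_int by blast

lemma dual_add: "x \<in> dual_lattice G \<Longrightarrow> y \<in> dual_lattice G \<Longrightarrow> x + y \<in> dual_lattice G"
  unfolding dual_lattice_def by (auto simp: bil_add_left)
lemma dual_neg: "x \<in> dual_lattice G \<Longrightarrow> - x \<in> dual_lattice G"
  unfolding dual_lattice_def by (auto simp: bil_neg_left)
lemma dual_zero: "0 \<in> dual_lattice G"
  unfolding dual_lattice_def by (auto simp: bil_zero_left)
lemma dual_scale: "x \<in> dual_lattice G \<Longrightarrow> of_int k *\<^sub>R x \<in> dual_lattice G"
  unfolding dual_lattice_def by (auto simp: bil_scale_left)

lemma carrier_DG [simp]: "carrier (dual_group G) = dual_lattice G"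
  by (simp add: dual_group_def)
lemma mult_DG [simp]: "x \<otimes>\<^bsub>dual_group G\<^esub> y = x + y"
  by (simp add: dual_group_def)
lemma one_DG [simp]: "\<one>\<^bsub>dual_group G\<^esub> = 0"
  by (simp add: dual_group_def)

lemma DG_comm: "comm_group (dual_group G)"
proof (rule comm_groupI)
  fix x assume "x \<in> carrier (dual_group G)"
  then show "\<exists>y\<in>carrier (dual_group G). y \<otimes>\<^bsub>dual_group G\<^esub> x = \<one>\<^bsub>dual_group G\<^esub>"
    by (intro bexI[of _ "- x"]) (auto intro: dual_neg)
qed (auto simp: dual_add dual_zero add.assoc add.commute)

lemma DG_group: "group (dual_group G)"
  using DG_comm comm_group_def by blast

lemma inv_DG: "x \<in> dual_lattice G \<Longrightarrow> inv\<^bsub>dual_group G\<^esub> x = - x"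
  by (rule group.inv_equality[OF DG_group]) (auto intro: dual_neg)

lemma intvecs_subgroup: "subgroup intvecs (dual_group G)"
proof (rule group.subgroupI[OF DG_group])
  show "intvecs \<subseteq> carrier (dual_group G)" using intvecs_dual by simp
  show "intvecs \<noteq> {}" using intvecs_zero by blast
  fix a b assume a: "a \<in> intvecs"
  then have "a \<in> dual_lattice G" using intvecs_dual by blast
  then show "inv\<^bsub>dual_group G\<^esub> a \<in> intvecs" using a by (simp add: inv_DG intvecs_neg)
  assume "b \<in> intvecs"
  then show "a \<otimes>\<^bsub>dual_group G\<^esub> b \<in> intvecs" using a by (simp add: intvecs_add)
qed

lemma intvecs_normal: "intvecs \<lhd> dual_group G"
  by (rule comm_group.subgroup_imp_normal[OF DG_comm intvecs_subgroup])

lemma K_group: "group (discriminant_group G)"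
  unfolding discriminant_group_def by (rule normal.factorgroup_is_group[OF intvecs_normal])

definition cl :: "int^16^16 \<Rightarrow> real^16 \<Rightarrow> (real^16) set" where
  "cl G x = intvecs #>\<^bsub>dual_group G\<^esub> x"

lemma cl_alt: "cl G x = (\<lambda>h. h + x) ` intvecs"
  by (auto simp: cl_def r_coset_def)

lemma cl_eq: "cl G x = cl G y \<longleftrightarrow> x - y \<in> intvecs"
proof
  assume "cl G x = cl G y"
  then have "x \<in> cl G y" unfolding cl_alt using intvecs_zero by (metis add_0 image_eqI)
  then obtain h where "h \<in> intvecs" "x = h + y" unfolding cl_alt by auto
  then show "x - y \<in> intvecs" by simp
next
  assume a: "x - y \<in> intvecs"
  show "cl G x = cl G y" unfolding cl_alt
  proof (intro subset_antisym subsetI)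
    fix z assume "z \<in> (\<lambda>h. h + x) ` intvecs"
    then obtain h where h: "h \<in> intvecs" "z = h + x" by auto
    then have "z = (h + (x - y)) + y" by simp
    then show "z \<in> (\<lambda>h. h + y) ` intvecs" using h a intvecs_add by blast
  next
    fix z assume "z \<in> (\<lambda>h. h + y) ` intvecs"
    then obtain h where h: "h \<in> intvecs" "z = h + y" by auto
    then have "z = (h - (x - y)) + x" by simp
    then show "z \<in> (\<lambda>h. h + x) ` intvecs" using h a intvecs_diff by blast
  qed
qed

lemma carrier_K: "carrier (discriminant_group G) = cl G ` dual_lattice G"
  unfolding discriminant_group_def cl_def by (simp add: carrier_FactGroup)

lemma mult_K: "x \<in> dual_lattice G \<Longrightarrow> y \<in> dual_lattice G \<Longrightarrow>
   cl G x \<otimes>\<^bsub>discriminant_group G\<^esub> cl G y = cl G (x + y)"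
  unfolding discriminant_group_def cl_def
  using normal.rcos_sum[OF intvecs_normal[of G], of x y] by simp

lemma one_K: "\<one>\<^bsub>discriminant_group G\<^esub> = cl G 0"
  unfolding discriminant_group_def by (simp add: cl_alt)

lemma inv_K: "x \<in> dual_lattice G \<Longrightarrow> inv\<^bsub>discriminant_group G\<^esub> (cl G x) = cl G (- x)"
  by (rule group.inv_equality[OF K_group]) (auto simp: mult_K one_K carrier_K dual_neg)

lemma cl_subgroup:
  assumes X: "X \<subseteq> dual_lattice G" "0 \<in> X" "\<And>x y. x \<in> X \<Longrightarrow> y \<in> X \<Longrightarrow> x + y \<in> X"
    "\<And>x. x \<in> X \<Longrightarrow> - x \<in> X"
  shows "subgroup (cl G ` X) (discriminant_group G)"
  apply (rule group.subgroupI[OF K_group])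
  using X by (auto simp: carrier_K inv_K mult_K subsetD)

section \<open>The elementary abelian group\<close>

lemma E_group: "group elem_ab_5_4"
  unfolding elem_ab_5_4_def by simp

lemma carrier_E: "carrier elem_ab_5_4 = (\<Pi>\<^sub>E i\<in>{..<4::nat}. {0..<5::int})"
  unfolding elem_ab_5_4_def by (simp add: carrier_integer_mod_group)

lemma card_E: "card (carrier elem_ab_5_4) = 625"
  unfolding carrier_E by (simp add: card_PiE)

lemma mod5: "(((2 * t mod 5 + t) mod 5 + t) mod 5 + t) mod (5::int) = 0"
  by (simp add: mod_add_left_eq)

lemma E_exp5: "a \<in> carrier elem_ab_5_4 \<Longrightarrow>
  a \<otimes>\<^bsub>elem_ab_5_4\<^esub> a \<otimes>\<^bsub>elem_ab_5_4\<^esub> a \<otimes>\<^bsub>elem_ab_5_4\<^esub> a \<otimes>\<^bsub>elem_ab_5_4\<^esub> a = \<one>\<^bsub>elem_ab_5_4\<^esub>"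
  unfolding elem_ab_5_4_def
  by (rule ext) (simp add: restrict_def mod5)


locale sublat =
  fixes G :: "int^16^16" and b :: "16 \<Rightarrow> real^16"
  assumes pd: "pos_def_integral_lattice G" and rl: "rootless G"
    and iso: "discriminant_group G \<cong> elem_ab_5_4"
    and bHS: "\<And>i. b i \<in> HS16" and bG: "\<And>i j. b i \<bullet> b j = of_int (G $ i $ j)"
begin

definition emb :: "real^16 \<Rightarrow> real^16" where "emb x = (\<Sum>i\<in>UNIV. x $ i *\<^sub>R b i)"

lemma bil_emb: "bil (gram G) x y = emb x \<bullet> emb y"
proof -
  have "bil (gram G) x y = (\<Sum>i\<in>UNIV. x$i * (\<Sum>j\<in>UNIV. of_int (G$i$j) * y$j))"
    by (simp add: bil_def inner16 matrix_vector_mult_def gram_def)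
  also have "\<dots> = (\<Sum>i\<in>UNIV. \<Sum>j\<in>UNIV. x$i * y$j * (b i \<bullet> b j))"
    by (simp add: bG sum_distrib_left mult_ac)
  also have "\<dots> = emb x \<bullet> emb y"
    unfolding emb_def inner_sum_left inner_sum_right by (subst sum.swap) (simp add: mult_ac)
  finally show ?thesis .
qed

lemma bil_sym: "bil (gram G) x y = bil (gram G) y x"
  by (simp add: bil_emb inner_commute)

lemma emb_add: "emb (x + y) = emb x + emb y"
  by (simp add: emb_def scaleR_add_left sum.distrib)
lemma emb_scale: "emb (c *\<^sub>R x) = c *\<^sub>R emb x"
  by (simp add: emb_def scaleR_sum_right)
lemma emb_neg: "emb (- x) = - emb x"
  using emb_scale[of "-1" x] by simp
lemma emb_diff: "emb (x - y) = emb x - emb y"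
  using emb_add[of x "- y"] emb_neg[of y] by simp
lemma emb_zero: "emb 0 = 0"
  using emb_scale[of 0 0] by simp

lemma emb_linear: "linear emb"
  by (rule linearI) (simp_all add: emb_add emb_scale)

lemma posdef: "x \<noteq> 0 \<Longrightarrow> bil (gram G) x x > 0"
  using pd unfolding pos_def_integral_lattice_def by blast

lemma emb_inj: "inj emb"
proof (rule injI)
  fix x y assume "emb x = emb y"
  then have "emb (x - y) = 0" by (simp add: emb_diff)
  then have "bil (gram G) (x - y) (x - y) = 0" by (simp add: bil_emb)
  then show "x = y" using posdef[of "x - y"] by (cases "x - y = 0") auto
qed

lemma emb_surj: "surj emb"
  using emb_linear emb_inj by (simp add: linear_injective_imp_surjective)

lemma Gmul_inj: "inj (\<lambda>x. gram G *v x)"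
proof (rule injI)
  fix x y assume "gram G *v x = gram G *v y"
  then have "gram G *v (x - y) = 0" by (simp add: matrix_vector_mult_diff_distrib)
  then have "bil (gram G) (x - y) (x - y) = 0" by (simp add: bil_def)
  then show "x = y" using posdef[of "x - y"] by (cases "x - y = 0") auto
qed

lemma Gmul_surj: "surj (\<lambda>x. gram G *v x)"
  using Gmul_inj by (simp add: linear_injective_imp_surjective)

lemma emb_int: "x \<in> intvecs \<Longrightarrow> emb x \<in> HS16"
  unfolding emb_def
proof (rule HS16_sum)
  fix i assume "x \<in> intvecs"
  then have "x $ i \<in> \<int>" by (simp add: intvecs_def)
  then obtain k where "x $ i = of_int k" by (auto elim: Ints_cases)
  then show "x $ i *\<^sub>R b i \<in> HS16" using HS16_scale[OF bHS[of i], of k] by simp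
qed

definition H :: "(real^16) set" where "H = {x. emb x \<in> HS16}"

lemma H_add: "x \<in> H \<Longrightarrow> y \<in> H \<Longrightarrow> x + y \<in> H"
  by (simp add: H_def emb_add HS16_add)
lemma H_neg: "x \<in> H \<Longrightarrow> - x \<in> H"
  by (simp add: H_def emb_neg HS16_neg)
lemma H_diff: "x \<in> H \<Longrightarrow> y \<in> H \<Longrightarrow> x - y \<in> H"
  by (simp add: H_def emb_diff HS16_diff)
lemma H_zero: "0 \<in> H"
  by (simp add: H_def emb_zero HS16_zero)
lemma intvecs_H: "x \<in> intvecs \<Longrightarrow> x \<in> H"
  by (simp add: H_def emb_int)
lemma H_iso: "x \<in> H \<Longrightarrow> y \<in> H \<Longrightarrow> bil (gram G) x y \<in> \<int>"
  by (simp add: H_def bil_emb HS16_inner_int)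
lemma H_D: "x \<in> H \<Longrightarrow> x \<in> dual_lattice G"
  unfolding dual_lattice_def using H_iso intvecs_H by blast

lemma exp5: assumes x: "x \<in> dual_lattice G" shows "5 *\<^sub>R x \<in> intvecs"
proof -
  let ?K = "discriminant_group G" and ?E = elem_ab_5_4
  obtain \<phi> where \<phi>: "\<phi> \<in> iso ?K ?E" using iso unfolding is_iso_def by blast
  then have hom: "\<phi> \<in> hom ?K ?E" and bij: "bij_betw \<phi> (carrier ?K) (carrier ?E)"
    by (auto simp: iso_def)
  have cK: "\<And>y. y \<in> dual_lattice G \<Longrightarrow> cl G y \<in> carrier ?K" by (simp add: carrier_K)
  define x2 where "x2 = x + x"
  define x3 where "x3 = x2 + x"
  define x4 where "x4 = x3 + x"
  define x5 where "x5 = x4 + x"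
  have d2: "x2 \<in> dual_lattice G" unfolding x2_def by (rule dual_add[OF x x])
  have d3: "x3 \<in> dual_lattice G" unfolding x3_def by (rule dual_add[OF d2 x])
  have d4: "x4 \<in> dual_lattice G" unfolding x4_def by (rule dual_add[OF d3 x])
  have d5: "x5 \<in> dual_lattice G" unfolding x5_def by (rule dual_add[OF d4 x])
  have st: "\<And>u. u \<in> dual_lattice G \<Longrightarrow> \<phi> (cl G (u + x)) = \<phi> (cl G u) \<otimes>\<^bsub>?E\<^esub> \<phi> (cl G x)"
  proof -
    fix u assume u: "u \<in> dual_lattice G"
    have "\<phi> (cl G (u + x)) = \<phi> (cl G u \<otimes>\<^bsub>?K\<^esub> cl G x)" by (simp only: mult_K[OF u x])
    also have "\<dots> = \<phi> (cl G u) \<otimes>\<^bsub>?E\<^esub> \<phi> (cl G x)" by (rule hom_mult[OF hom cK[OF u] cK[OF x]])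
    finally show "\<phi> (cl G (u + x)) = \<phi> (cl G u) \<otimes>\<^bsub>?E\<^esub> \<phi> (cl G x)" .
  qed
  have px: "\<phi> (cl G x) \<in> carrier ?E" using bij_betwE[OF bij] cK[OF x] by blast
  have "\<phi> (cl G x5) =
     \<phi> (cl G x) \<otimes>\<^bsub>?E\<^esub> \<phi> (cl G x) \<otimes>\<^bsub>?E\<^esub> \<phi> (cl G x) \<otimes>\<^bsub>?E\<^esub> \<phi> (cl G x) \<otimes>\<^bsub>?E\<^esub> \<phi> (cl G x)"
    unfolding x5_def st[OF d4] unfolding x4_def st[OF d3] unfolding x3_def st[OF d2]
    unfolding x2_def st[OF x] ..
  also have "\<dots> = \<one>\<^bsub>?E\<^esub>" using E_exp5[OF px] .
  also have "\<dots> = \<phi> (\<one>\<^bsub>?K\<^esub>)" using hom_one[OF hom K_group E_group] by simp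
  finally have e: "\<phi> (cl G x5) = \<phi> (cl G 0)" unfolding one_K .
  have inj: "inj_on \<phi> (carrier ?K)" using bij unfolding bij_betw_def by (rule conjunct1)
  have "cl G x5 = cl G 0" by (rule inj_onD[OF inj e cK[OF d5] cK[OF dual_zero]])
  then have "x5 \<in> intvecs" by (simp add: cl_eq)
  moreover have "(5::real) = 1 + 1 + 1 + 1 + 1" by simp
  then have "5 *\<^sub>R x = x5" unfolding x5_def x4_def x3_def x2_def by (simp only: scaleR_add_left scaleR_one)
  ultimately show ?thesis by simp
qed

lemma card_K: "card (cl G ` dual_lattice G) = 625"
proof -
  obtain \<phi> where "\<phi> \<in> iso (discriminant_group G) elem_ab_5_4" using iso unfolding is_iso_def by blast
  then have "bij_betw \<phi> (carrier (discriminant_group G)) (carrier elem_ab_5_4)" by (auto simp: iso_def)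
  then show ?thesis using bij_betw_same_card card_E carrier_K by metis
qed

lemma finite_K: "finite (cl G ` dual_lattice G)"
  by (rule card_ge_0_finite) (simp add: card_K)

lemma cl_dvd:
  assumes X: "X \<subseteq> dual_lattice G" "0 \<in> X" "\<And>x y. x \<in> X \<Longrightarrow> y \<in> X \<Longrightarrow> x + y \<in> X"
    "\<And>x. x \<in> X \<Longrightarrow> - x \<in> X"
  shows "card (cl G ` X) dvd 625"
proof -
  have "card (rcosets\<^bsub>discriminant_group G\<^esub> (cl G ` X)) * card (cl G ` X) = order (discriminant_group G)"
    by (rule group.lagrange[OF K_group cl_subgroup[OF X]])
  then show ?thesis by (metis card_K carrier_K dvd_triv_right order_def)
qed

lemma nondeg: assumes h: "h \<in> dual_lattice G" and all: "\<And>y. y \<in> dual_lattice G \<Longrightarrow> bil (gram G) h y \<in> \<int>"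
  shows "h \<in> intvecs"
  unfolding intvecs_def
proof (intro CollectI allI)
  fix j
  obtain y where y: "gram G *v y = ax j" using Gmul_surj by (metis surjD)
  have "y \<in> dual_lattice G"
    unfolding dual_lattice_def
  proof (intro CollectI ballI)
    fix z assume "z \<in> intvecs"
    have "bil (gram G) y z = bil (gram G) z y" by (rule bil_sym)
    also have "\<dots> = z $ j" by (simp add: bil_def y ax_def inner_axis)
    finally show "bil (gram G) y z \<in> \<int>" using \<open>z \<in> intvecs\<close> by (simp add: intvecs_def)
  qed
  then have "bil (gram G) h y \<in> \<int>" by (rule all)
  then show "h $ j \<in> \<int>" by (simp add: bil_def y ax_def inner_axis)
qed

definition q :: "16 \<Rightarrow> real^16" where "q i = inv_into UNIV emb (ax i)"

lemma emb_q: "emb (q i) = ax i"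
  unfolding q_def by (rule surj_f_inv_f[OF emb_surj])

definition v :: "16 \<Rightarrow> int \<Rightarrow> real^16" where "v i s = of_int s *\<^sub>R (2 *\<^sub>R q i)"

lemma v_H: "v i s \<in> H"
proof -
  have "emb (v i s) = of_int s *\<^sub>R (2 *\<^sub>R ax i)" by (simp add: v_def emb_scale emb_q)
  moreover have "2 *\<^sub>R ax i \<in> HS16" using ax_D16 by (simp add: HS16_def)
  moreover have "of_int s *\<^sub>R (2 *\<^sub>R ax i) \<in> HS16" using HS16_scale calculation(2) by blast
  ultimately show ?thesis unfolding H_def by simp
qed

lemma intvecs_from_2_5: "2 *\<^sub>R x \<in> intvecs \<Longrightarrow> 5 *\<^sub>R x \<in> intvecs \<Longrightarrow> x \<in> intvecs"
proof -
  assume a: "2 *\<^sub>R x \<in> intvecs" "5 *\<^sub>R x \<in> intvecs"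
  have e1: "3 *\<^sub>R (2 *\<^sub>R x) - 5 *\<^sub>R x = (3*2 - 5::real) *\<^sub>R x" by (simp only: scaleR_scaleR scaleR_diff_left)
  have e2: "x = 3 *\<^sub>R (2 *\<^sub>R x) - 5 *\<^sub>R x" unfolding e1 by simp
  have "3 *\<^sub>R (2 *\<^sub>R x) - 5 *\<^sub>R x \<in> intvecs" by (rule intvecs_diff[OF intvecs_scale_num[OF a(1)] a(2)])
  then show ?thesis using e2 by simp
qed

lemma noroot:
  assumes ij: "i \<noteq> j" and s: "s \<in> {1, -1}" and t: "t \<in> {1, -1}"
  shows "cl G (v i s) \<noteq> cl G (v j t)"
proof
  assume "cl G (v i s) = cl G (v j t)"
  then have d: "v i s - v j t \<in> intvecs" by (simp add: cl_eq)
  define x where "x = of_int s *\<^sub>R q i - of_int t *\<^sub>R q j"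
  have "2 *\<^sub>R x = v i s - v j t" by (simp add: x_def v_def algebra_simps)
  with d have x2: "2 *\<^sub>R x \<in> intvecs" by simp
  define r where "r = ax i - of_int (s * t) *\<^sub>R ax j"
  have ss: "(of_int s :: real) * of_int s = 1" using s by auto
  have "emb x = of_int s *\<^sub>R ax i - of_int t *\<^sub>R ax j" by (simp add: x_def emb_diff emb_scale emb_q)
  also have "\<dots> = of_int s *\<^sub>R r"
  proof -
    have "of_int s *\<^sub>R r = of_int s *\<^sub>R ax i - (of_int s * (of_int s * of_int t)) *\<^sub>R ax j"
      by (simp add: r_def scaleR_diff_right mult.assoc)
    also have "of_int s * (of_int s * of_int t) = (of_int t :: real)" using ss by (simp add: mult.assoc[symmetric])
    finally show ?thesis by simp
  qed
  finally have ex: "emb x = of_int s *\<^sub>R r" .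
  have st: "s * t \<in> {1, -1}" using s t by auto
  have rD: "r \<in> D16" unfolding r_def by (rule root_D16[OF st])
  have "x \<in> H" unfolding H_def using ex HS16_scale[of r s] rD by (simp add: HS16_def)
  then have "5 *\<^sub>R x \<in> intvecs" by (intro exp5 H_D)
  with x2 have xi: "x \<in> intvecs" by (rule intvecs_from_2_5)
  have "bil (gram G) x x = (of_int s * of_int s) * (r \<bullet> r)" by (simp add: bil_emb ex mult_ac)
  also have "\<dots> = 2" using ss root_norm[OF ij st] by (simp add: r_def)
  finally have "bil (gram G) x x = 2" .
  with xi rl show False unfolding rootless_def by blast
qed

lemma selfneg:
  assumes "cl G (v i 1) = cl G (v i (-1))" shows "cl G (v i 1) = cl G 0"
proof -
  have a: "v i 1 - v i (-1) \<in> intvecs" using assms by (simp add: cl_eq)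
  have "v i 1 - v i (-1) = 2 *\<^sub>R v i 1" by (simp add: v_def)
  with a have "2 *\<^sub>R v i 1 \<in> intvecs" by simp
  moreover have "5 *\<^sub>R v i 1 \<in> intvecs" by (intro exp5 H_D v_H)
  ultimately have "v i 1 \<in> intvecs" by (rule intvecs_from_2_5)
  then show ?thesis by (simp add: cl_eq)
qed


lemma W_sub: "(cl G ` H) \<subseteq> cl G ` dual_lattice G"
  using H_D by blast

lemma W_card31: "31 \<le> card (cl G ` H)"
proof -
  define A where "A = (\<lambda>i. cl G (v i 1)) ` UNIV"
  define B where "B = (\<lambda>i. cl G (v i (-1))) ` UNIV"
  have injA: "inj (\<lambda>i. cl G (v i 1))" by (rule injI) (metis noroot insertI1)
  have injB: "inj (\<lambda>i. cl G (v i (-1)))" by (rule injI) (metis noroot insertI1 insertI2 singletonI)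
  have cA: "card A = 16" unfolding A_def using card_image[OF injA] by simp
  have cB: "card B = 16" unfolding B_def using card_image[OF injB] by simp
  have AB: "A \<inter> B \<subseteq> {cl G 0}"
  proof
    fix k assume "k \<in> A \<inter> B"
    then obtain i j where k: "k = cl G (v i 1)" "k = cl G (v j (-1))" unfolding A_def B_def by auto
    show "k \<in> {cl G 0}"
    proof (cases "i = j")
      case True then show ?thesis using k selfneg by auto
    next
      case False then show ?thesis using k noroot[OF False, of 1 "-1"] by auto
    qed
  qed
  have cAB: "card (A \<inter> B) \<le> 1" using card_mono[OF _ AB] by simp
  have fin: "finite A" "finite B" unfolding A_def B_def by auto
  have "card (A \<union> B) + card (A \<inter> B) = 32" using card_Un_Int[OF fin] cA cB by simp
  then have u: "31 \<le> card (A \<union> B)" using cAB by simp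
  have "A \<union> B \<subseteq> (cl G ` H)" unfolding A_def B_def using v_H by blast
  moreover have "finite (cl G ` H)" using finite_subset[OF W_sub finite_K] .
  ultimately have "card (A \<union> B) \<le> card (cl G ` H)" by (rule card_mono[rotated])
  with u show ?thesis by simp
qed

lemma W_dvd: "card (cl G ` H) dvd 625"
  by (rule cl_dvd) (auto intro: H_D H_zero H_add H_neg)

definition Hy :: "real^16 \<Rightarrow> (real^16) set" where
  "Hy y0 = {h + of_int r *\<^sub>R y0 | h r. h \<in> H}"

lemma Hy_D: assumes y0: "y0 \<in> dual_lattice G" shows "Hy y0 \<subseteq> dual_lattice G"
proof
  fix x assume "x \<in> Hy y0"
  then obtain h r where "x = h + of_int r *\<^sub>R y0" "h \<in> H" unfolding Hy_def by blast
  then show "x \<in> dual_lattice G" using dual_add[OF H_D dual_scale[OF y0]] by simp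
qed

lemma Hy_dvd: assumes y0: "y0 \<in> dual_lattice G" shows "card (cl G ` Hy y0) dvd 625"
proof (rule cl_dvd)
  show "Hy y0 \<subseteq> dual_lattice G" using Hy_D[OF y0] .
  show "0 \<in> Hy y0" unfolding Hy_def using H_zero by force
  fix x y assume "x \<in> Hy y0" "y \<in> Hy y0"
  then obtain h r h' r' where "x = h + of_int r *\<^sub>R y0" "h \<in> H" "y = h' + of_int r' *\<^sub>R y0" "h' \<in> H"
    unfolding Hy_def by blast
  then have "x + y = (h + h') + of_int (r + r') *\<^sub>R y0" "h + h' \<in> H"
    by (auto simp: algebra_simps scaleR_add_left H_add)
  then show "x + y \<in> Hy y0" unfolding Hy_def by blast
next
  fix x assume "x \<in> Hy y0"
  then obtain h r where "x = h + of_int r *\<^sub>R y0" "h \<in> H" unfolding Hy_def by blast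
  then have "- x = (- h) + of_int (- r) *\<^sub>R y0" "- h \<in> H" by (auto simp: H_neg)
  then show "- x \<in> Hy y0" unfolding Hy_def by blast
qed

lemma W_Hy: "(cl G ` H) \<subseteq> cl G ` Hy y0"
proof
  fix k assume "k \<in> (cl G ` H)"
  then obtain h where "h \<in> H" "k = cl G h" by blast
  moreover have "h = h + of_int 0 *\<^sub>R y0" by simp
  ultimately show "k \<in> cl G ` Hy y0" unfolding Hy_def by blast
qed

lemma gen: "\<exists>y0 \<in> dual_lattice G. cl G ` Hy y0 = cl G ` dual_lattice G"
proof -
  have c: "card (cl G ` H) = 125 \<or> card (cl G ` H) = 625" using dvd625[OF W_dvd W_card31] .
  show ?thesis
  proof (cases "card (cl G ` H) = 625")
    case True
    have "(cl G ` H) = cl G ` dual_lattice G" by (rule card_subset_eq[OF finite_K W_sub]) (simp add: True card_K)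
    moreover have "cl G ` Hy 0 = (cl G ` H)" unfolding Hy_def by auto
    ultimately have "cl G ` Hy 0 = cl G ` dual_lattice G" by simp
    then show ?thesis using dual_zero[of G] by blast
  next
    case False
    then have c125: "card (cl G ` H) = 125" using c by simp
    then have "(cl G ` H) \<noteq> cl G ` dual_lattice G" using card_K by auto
    then obtain y0 where y0: "y0 \<in> dual_lattice G" "cl G y0 \<notin> (cl G ` H)" using W_sub by blast
    have sub: "cl G ` Hy y0 \<subseteq> cl G ` dual_lattice G"
    proof -
      have "Hy y0 \<subseteq> dual_lattice G" using Hy_D[OF y0(1)] .
      then show ?thesis by blast
    qed
    have "y0 = 0 + of_int 1 *\<^sub>R y0" by simp
    then have "y0 \<in> Hy y0" unfolding Hy_def using H_zero by blast
    then have "(cl G ` H) \<subset> cl G ` Hy y0" using W_Hy y0(2) by blast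
    then have "card (cl G ` H) < card (cl G ` Hy y0)"
      by (rule psubset_card_mono[OF finite_subset[OF sub finite_K]])
    then have "31 \<le> card (cl G ` Hy y0)" using c125 by simp
    then have "card (cl G ` Hy y0) = 125 \<or> card (cl G ` Hy y0) = 625"
      using dvd625[OF Hy_dvd[OF y0(1)]] by simp
    with \<open>card (cl G ` H) < card (cl G ` Hy y0)\<close> c125 have "card (cl G ` Hy y0) = 625" by auto
    then have "cl G ` Hy y0 = cl G ` dual_lattice G"
      by (intro card_subset_eq[OF finite_K sub]) (simp add: card_K)
    with y0 show ?thesis by blast
  qed
qed

lemma contradiction: False
proof -
  obtain y0 where y0: "y0 \<in> dual_lattice G" and gy: "cl G ` Hy y0 = cl G ` dual_lattice G"
    using gen by blast
  have "6 \<le> card (cl G ` H)" using W_card31 by simp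
  then obtain B6 where B6: "B6 \<subseteq> (cl G ` H)" "card B6 = 6" by (meson obtain_subset_with_card_n)
  define rep where "rep = inv_into H (cl G)"
  have rep: "\<And>k. k \<in> (cl G ` H) \<Longrightarrow> rep k \<in> H \<and> cl G (rep k) = k"
  proof -
    fix k assume k: "k \<in> cl G ` H"
    show "rep k \<in> H \<and> cl G (rep k) = k" unfolding rep_def
      using inv_into_into[OF k] f_inv_into_f[OF k] by blast
  qed
  have fiveint: "\<And>h. h \<in> H \<Longrightarrow> 5 * bil (gram G) h y0 \<in> \<int>"
  proof -
    fix h assume "h \<in> H"
    then have "5 *\<^sub>R h \<in> intvecs" by (intro exp5 H_D)
    then have "bil (gram G) y0 (5 *\<^sub>R h) \<in> \<int>" using y0 unfolding dual_lattice_def by blast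
    then show "5 * bil (gram G) h y0 \<in> \<int>" by (simp add: bil_sym[of y0] bil_scale_left)
  qed
  define f where "f k = \<lfloor>5 * bil (gram G) (rep k) y0\<rfloor> mod 5" for k
  have "f ` B6 \<subseteq> {0..<5}" unfolding f_def by auto
  then have "card (f ` B6) \<le> 5" using card_mono[of "{0..<5::int}"] by fastforce
  then have "\<not> inj_on f B6" using B6(2) card_image by fastforce
  then obtain k1 k2 where k: "k1 \<in> B6" "k2 \<in> B6" "k1 \<noteq> k2" "f k1 = f k2"
    unfolding inj_on_def by blast
  have r1: "rep k1 \<in> H" "cl G (rep k1) = k1" using rep k(1) B6(1) by auto
  have r2: "rep k2 \<in> H" "cl G (rep k2) = k2" using rep k(2) B6(1) by auto
  define h where "h = rep k1 - rep k2"
  have hH: "h \<in> H" unfolding h_def using r1 r2 by (simp add: H_diff)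
  have hni: "h \<notin> intvecs"
  proof
    assume "h \<in> intvecs"
    then have "cl G (rep k1) = cl G (rep k2)" unfolding h_def by (simp only: cl_eq)
    then show False using r1(2) r2(2) k(3) by simp
  qed
  obtain a1 where a1: "5 * bil (gram G) (rep k1) y0 = of_int a1" using fiveint[OF r1(1)] by (auto elim: Ints_cases)
  obtain a2 where a2: "5 * bil (gram G) (rep k2) y0 = of_int a2" using fiveint[OF r2(1)] by (auto elim: Ints_cases)
  have "a1 mod 5 = a2 mod 5" using k(4) unfolding f_def a1 a2 by simp
  then obtain m where m: "a1 - a2 = 5 * m" by (metis mod_eq_dvd_iff dvdE)
  have "5 * bil (gram G) h y0 = of_int (a1 - a2)" unfolding h_def by (simp add: bil_diff_left a1[symmetric] a2[symmetric] algebra_simps)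
  then have hy0: "bil (gram G) h y0 = of_int m" using m by simp
  have "h \<in> intvecs"
  proof (rule nondeg)
    show hD: "h \<in> dual_lattice G" using hH by (rule H_D)
    fix y assume "y \<in> dual_lattice G"
    then have "cl G y \<in> cl G ` Hy y0" using gy by blast
    then obtain w where "w \<in> Hy y0" "cl G y = cl G w" by blast
    then obtain h' r where w: "w = h' + of_int r *\<^sub>R y0" "h' \<in> H" and z: "y - w \<in> intvecs"
      unfolding Hy_def by (auto simp: cl_eq)
    have "y = h' + of_int r *\<^sub>R y0 + (y - w)" using w by simp
    then have "bil (gram G) h y = bil (gram G) h h' + of_int r * bil (gram G) h y0 + bil (gram G) h (y - w)"
      by (metis bil_add_right bil_scale_right)
    moreover have "bil (gram G) h h' \<in> \<int>" using H_iso[OF hH w(2)] .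
    moreover have "bil (gram G) h (y - w) \<in> \<int>" using hD z unfolding dual_lattice_def by blast
    ultimately show "bil (gram G) h y \<in> \<int>" using hy0 by simp
  qed
  with hni show False by blast
qed

end

theorem lemma4p2:
  fixes G :: "int^16^16"
  assumes "pos_def_integral_lattice G"
    and "rootless G"
    and "discriminant_group G \<cong> elem_ab_5_4"
  shows "\<not> isometric_to_sublattice_HS16 G"
proof
  assume "isometric_to_sublattice_HS16 G"
  then obtain b where b: "\<forall>i. b i \<in> HS16" "\<forall>i j. b i \<bullet> b j = of_int (G $ i $ j)"
    unfolding isometric_to_sublattice_HS16_def by blast
  interpret sublat G b using assms b by unfold_locales auto
  show False by (rule contradiction)
qed

end
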